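(* Let $n\ge1$, let $G^\star=([n],E^\star)$ be a directed graph (directed cycles allowed), and let $S_1=\operatorname{argmin}_{\mathcal S}|E^{(1)}|$, $S_2=\operatorname{argmin}_{S_1}|E^{(2)}|$, $S_3=\operatorname{argmin}_{(\mathcal P,\pi)\in S_2}|E^{(3)}_{(\mathcal P,\pi)}|$. Then (i) the partially ordered partition associated with $G^\star$ belongs to $S_3$, and (ii) for every $(\mathcal P,\pi)\in S_3$, $E^{(3)}_{(\mathcal P,\pi)}$ equals the set of unshielded perfect non-conductors in $G^\star$.
   Context: $[n]=\{1,\dots,n\}$. The observed distribution is Markov and faithful to $G^\star$; for distinct $a,b$ and $Z\subseteq[n]\setminus\{a,b\}$, $a\perp\!\!\!\perp b\mid Z$ means $a$ and $b$ are $d$-separated given $Z$ in $G^\star$, and $a\not\perp\!\!\!\perp b\mid Z$ is its negation. In a directed graph, $a$ is an ancestor of $b$ (and $b$ a descendant of $a$) if $a=b$ or there is a directed path from $a$ to $b$. Distinct $a,b$ are $p$-adjacent in a directed graph $G$ if there is an edge between them, or they have a common child which is an ancestor of $a$ or of $b$. A triple $(a,b,c)$ such that $a,c$ are not $p$-adjacent while $a,b$ and $c,b$ are $p$-adjacent is an unshielded conductor if $b$ is an ancestor of $a$ or of $c$, and an unshielded non-conductor otherwise; an unshielded non-conductor $(a,b,c)$ is perfect if $b$ is a descendant of a common child of $a$ and $c$, and imperfect otherwise. $\mathcal S$ is the set of pairs $(\mathcal P,\pi)$ with $\mathcal P$ a partition of $[n]$ and $\pi$ a partial order on $\mathcal P$;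 $C_1\le_\pi C_2$ iff $(C_1,C_2)\in\pi$; $C_{i,\mathcal P}$ is the block containing $i$; $C\le_\pi\max\{C_1,\dots,C_t\}$ means $C\le_\pi C_i$ for some $i$. The strongly connected components of a directed graph $G$ are the classes of $i\sim j$ iff $i=j$ or there are directed paths $i\to j$ and $j\to i$; on them $C_1\le_G C_2$ iff $C_1=C_2$ or there is a directed path from a vertex of $C_1$ to a vertex of $C_2$. The partially ordered partition associated with $G$ is (its set of strongly connected components, $\le_G$). For $(\mathcal P,\pi)\in\mathcal S$: $E^{(1)}_{(\mathcal P,\pi)}=\{(a,b): a\ne b,\ a\not\perp\!\!\!\perp b\mid\bigcup\{C\in\mathcal P: C\le_\pi\max\{C_{a,\mathcal P},C_{b,\mathcal P}\}\}\setminus\{a,b\}\}$; $E^{(2)}_{(\mathcal P,\pi)}$ is the set of $(a,b,c)$ distinct with $(a,b),(c,b)\in E^{(1)}$, $(a,c)\notin E^{(1)}$, $C_{b,\mathcal P}\le_\pi\max\{C_{a,\mathcal P},C_{c,\mathcal P}\}$; $E^{(3)}_{(\mathcal P,\pi)}$ is the set of $(a,b,c)$ distinct with $(a,b),(c,b)\in E^{(1)}$, $(a,c)\notin E^{(1)}$, and $a\not\perp\!\!\!\perp c\mid\bigcup\{C\in\mathcal P: C\le_\pi\max\{C_{a,\mathcal P},C_{b,\mathcal P},C_{c,\mathcal P}\}\}\setminus\{a,c\}$ (all $E$-sets indexed by $(\mathcal P,\pi)$). *)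

theory Defs
  imports Main "HOL-Library.Disjoint_Sets"
begin

(* Directed graph on vertex set {1..n}: edge relation E :: (nat * nat) set, (x,y) \<in> E means x \<rightarrow> y. *)

definition anc :: "(nat \<times> nat) set \<Rightarrow> nat \<Rightarrow> nat \<Rightarrow> bool" where
  "anc E a b \<longleftrightarrow> (a, b) \<in> E\<^sup>*"

(* A path: distinct vertex list vs with an orientation list ds;
   ds!i = True means edge vs!i \<rightarrow> vs!(i+1), False means vs!(i+1) \<rightarrow> vs!i. *)
definition is_path :: "(nat \<times> nat) set \<Rightarrow> nat list \<Rightarrow> bool list \<Rightarrow> bool" where
  "is_path E vs ds \<longleftrightarrow> length vs \<ge> 2 \<and> distinct vs \<and> length ds = length vs - 1 \<and>
     (\<forall>i < length ds. (if ds ! i then (vs ! i, vs ! Suc i) \<in> E else (vs ! Suc i, vs ! i) \<in> E))"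

definition is_collider :: "bool list \<Rightarrow> nat \<Rightarrow> bool" where
  "is_collider ds i \<longleftrightarrow> ds ! (i - 1) \<and> \<not> ds ! i"

definition d_connected :: "(nat \<times> nat) set \<Rightarrow> nat \<Rightarrow> nat \<Rightarrow> nat set \<Rightarrow> bool" where
  "d_connected E a b Z \<longleftrightarrow> (\<exists>vs ds. is_path E vs ds \<and> hd vs = a \<and> last vs = b \<and>
     (\<forall>i. 0 < i \<and> i < length vs - 1 \<longrightarrow>
        (if is_collider ds i then (\<exists>z\<in>Z. anc E (vs ! i) z) else vs ! i \<notin> Z)))"

definition dsep :: "(nat \<times> nat) set \<Rightarrow> nat \<Rightarrow> nat \<Rightarrow> nat set \<Rightarrow> bool" where
  "dsep E a b Z \<longleftrightarrow> \<not> d_connected E a b Z"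

definition p_adj :: "(nat \<times> nat) set \<Rightarrow> nat \<Rightarrow> nat \<Rightarrow> bool" where
  "p_adj E a b \<longleftrightarrow> a \<noteq> b \<and> ((a, b) \<in> E \<or> (b, a) \<in> E \<or>
     (\<exists>c. (a, c) \<in> E \<and> (b, c) \<in> E \<and> (anc E c a \<or> anc E c b)))"

definition perfect_nonconductors :: "nat \<Rightarrow> (nat \<times> nat) set \<Rightarrow> (nat \<times> nat \<times> nat) set" where
  "perfect_nonconductors n E = {(a, b, c). a \<in> {1..n} \<and> b \<in> {1..n} \<and> c \<in> {1..n} \<and>
      a \<noteq> c \<and> \<not> p_adj E a c \<and> p_adj E a b \<and> p_adj E c b \<and>
      \<not> anc E b a \<and> \<not> anc E b c \<and>
      (\<exists>d. (a, d) \<in> E \<and> (c, d) \<in> E \<and> anc E d b)}"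

definition POP :: "nat \<Rightarrow> (nat set set \<times> (nat set \<times> nat set) set) set" where
  "POP n = {(P, \<pi>). partition_on {1..n} P \<and> \<pi> \<subseteq> P \<times> P \<and> partial_order_on P \<pi>}"

definition blk :: "nat set set \<Rightarrow> nat \<Rightarrow> nat set" where
  "blk P i = (THE C. C \<in> P \<and> i \<in> C)"

(* \<Union>{C \<in> P. C \<le>_\<pi> max{C_x : x \<in> X}} *)
definition below :: "nat set set \<Rightarrow> (nat set \<times> nat set) set \<Rightarrow> nat set \<Rightarrow> nat set" where
  "below P \<pi> X = \<Union>{C \<in> P. \<exists>x\<in>X. (C, blk P x) \<in> \<pi>}"

definition E1 :: "nat \<Rightarrow> (nat \<times> nat) set \<Rightarrow> nat set set \<times> (nat set \<times> nat set) set \<Rightarrow> (nat \<times> nat) set" where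
  "E1 n E s = (case s of (P, \<pi>) \<Rightarrow>
     {(a, b). a \<in> {1..n} \<and> b \<in> {1..n} \<and> a \<noteq> b \<and> \<not> dsep E a b (below P \<pi> {a, b} - {a, b})})"

definition E2 :: "nat \<Rightarrow> (nat \<times> nat) set \<Rightarrow> nat set set \<times> (nat set \<times> nat set) set \<Rightarrow> (nat \<times> nat \<times> nat) set" where
  "E2 n E s = (case s of (P, \<pi>) \<Rightarrow>
     {(a, b, c). a \<in> {1..n} \<and> b \<in> {1..n} \<and> c \<in> {1..n} \<and> a \<noteq> b \<and> b \<noteq> c \<and> a \<noteq> c \<and>
        (a, b) \<in> E1 n E s \<and> (c, b) \<in> E1 n E s \<and> (a, c) \<notin> E1 n E s \<and>
        (\<exists>x\<in>{a, c}. (blk P b, blk P x) \<in> \<pi>)})"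

definition E3 :: "nat \<Rightarrow> (nat \<times> nat) set \<Rightarrow> nat set set \<times> (nat set \<times> nat set) set \<Rightarrow> (nat \<times> nat \<times> nat) set" where
  "E3 n E s = (case s of (P, \<pi>) \<Rightarrow>
     {(a, b, c). a \<in> {1..n} \<and> b \<in> {1..n} \<and> c \<in> {1..n} \<and> a \<noteq> b \<and> b \<noteq> c \<and> a \<noteq> c \<and>
        (a, b) \<in> E1 n E s \<and> (c, b) \<in> E1 n E s \<and> (a, c) \<notin> E1 n E s \<and>
        \<not> dsep E a c (below P \<pi> {a, b, c} - {a, c})})"

definition argmin_on :: "'s set \<Rightarrow> ('s \<Rightarrow> 'x set) \<Rightarrow> 's set" where
  "argmin_on S f = {s \<in> S. \<forall>t\<in>S. card (f s) \<le> card (f t)}"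

definition S3 :: "nat \<Rightarrow> (nat \<times> nat) set \<Rightarrow> (nat set set \<times> (nat set \<times> nat set) set) set" where
  "S3 n E = argmin_on (argmin_on (argmin_on (POP n) (E1 n E)) (E2 n E)) (E3 n E)"

definition scc_partition :: "nat \<Rightarrow> (nat \<times> nat) set \<Rightarrow> nat set set" where
  "scc_partition n E = {{j \<in> {1..n}. (i = j) \<or> ((i, j) \<in> E\<^sup>+ \<and> (j, i) \<in> E\<^sup>+)} | i. i \<in> {1..n}}"

definition scc_order :: "nat \<Rightarrow> (nat \<times> nat) set \<Rightarrow> (nat set \<times> nat set) set" where
  "scc_order n E = {(C1, C2). C1 \<in> scc_partition n E \<and> C2 \<in> scc_partition n E \<and>
     (C1 = C2 \<or> (\<exists>x\<in>C1. \<exists>y\<in>C2. (x, y) \<in> E\<^sup>+))}"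

end

theory Submission
  imports Defs
begin


definition dwalk :: "(nat \<times> nat) set \<Rightarrow> nat set \<Rightarrow> nat list \<Rightarrow> bool list \<Rightarrow> bool" where
  "dwalk E Z vs ds \<longleftrightarrow> length vs \<ge> 2 \<and> length ds = length vs - 1 \<and>
     (\<forall>i < length ds. (if ds ! i then (vs ! i, vs ! Suc i) \<in> E else (vs ! Suc i, vs ! i) \<in> E)) \<and>
     (\<forall>i. 0 < i \<and> i < length vs - 1 \<longrightarrow>
        (if is_collider ds i then (\<exists>z\<in>Z. anc E (vs ! i) z) else vs ! i \<notin> Z))"

lemma d_connected_iff:
  "d_connected E a b Z \<longleftrightarrow> (\<exists>vs ds. dwalk E Z vs ds \<and> distinct vs \<and> hd vs = a \<and> last vs = b)"
  unfolding d_connected_def dwalk_def is_path_def by blast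

lemma dwalk_rev:
  assumes "dwalk E Z vs ds"
  shows "dwalk E Z (rev vs) (rev (map Not ds))"
proof -
  define m where "m = length ds"
  have L: "length vs = Suc m" "m \<ge> 1" using assms unfolding dwalk_def m_def by auto
  have rv: "rev vs ! i = vs ! (m - i)" if "i \<le> m" for i
    using that L by (simp add: rev_nth)
  have rd: "rev (map Not ds) ! i = (\<not> ds ! (m - 1 - i))" if "i < m" for i
    using that L by (simp add: rev_nth m_def)
  have e: "\<forall>i < length (rev (map Not ds)). (if rev (map Not ds) ! i then (rev vs ! i, rev vs ! Suc i) \<in> E else (rev vs ! Suc i, rev vs ! i) \<in> E)"
  proof (intro allI impI)
    fix i assume "i < length (rev (map Not ds))"
    hence i: "i < m" by (simp add: m_def)
    have "(if ds ! (m - 1 - i) then (vs ! (m - 1 - i), vs ! Suc (m - 1 - i)) \<in> E else (vs ! Suc (m - 1 - i), vs ! (m - 1 - i)) \<in> E)"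
      using assms i unfolding dwalk_def m_def by auto
    moreover have "Suc (m - 1 - i) = m - i" "m - 1 - i = m - Suc i" using i by auto
    ultimately show "(if rev (map Not ds) ! i then (rev vs ! i, rev vs ! Suc i) \<in> E else (rev vs ! Suc i, rev vs ! i) \<in> E)"
      using rv[of i] rv[of "Suc i"] rd[OF i] i by auto
  qed
  have c: "\<forall>i. 0 < i \<and> i < length (rev vs) - 1 \<longrightarrow>
        (if is_collider (rev (map Not ds)) i then (\<exists>z\<in>Z. anc E (rev vs ! i) z) else rev vs ! i \<notin> Z)"
  proof (intro allI impI)
    fix i assume i: "0 < i \<and> i < length (rev vs) - 1"
    hence i2: "0 < m - i" "m - i < length vs - 1" using L by auto
    have "is_collider (rev (map Not ds)) i = is_collider ds (m - i)"
    proof -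
      have "m - 1 - (i - 1) = m - i" "m - i - 1 = m - 1 - i" using i L by auto
      moreover have "i - 1 < m" "i < m" using i L by auto
      ultimately show ?thesis unfolding is_collider_def using rd[of "i - 1"] rd[of i] by auto
    qed
    thus "(if is_collider (rev (map Not ds)) i then (\<exists>z\<in>Z. anc E (rev vs ! i) z) else rev vs ! i \<notin> Z)"
      using assms i2 rv[of i] i L unfolding dwalk_def by auto
  qed
  show ?thesis using e c L unfolding dwalk_def m_def by auto
qed

lemma right_run:
  assumes ed: "\<forall>i < length ds. (if ds ! i then (vs ! i, vs ! Suc i) \<in> E else (vs ! Suc i, vs ! i) \<in> E)"
  shows "i < length ds \<Longrightarrow> ds ! i \<Longrightarrow> \<exists>k. i < k \<and> k \<le> length ds \<and> (vs ! i, vs ! k) \<in> E\<^sup>* \<and>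
            (\<forall>l. i \<le> l \<and> l < k \<longrightarrow> ds ! l) \<and> (k = length ds \<or> is_collider ds k)"
proof (induction "length ds - i" arbitrary: i rule: less_induct)
  case less
  have e: "(vs ! i, vs ! Suc i) \<in> E" using ed less.prems by auto
  have r1: "\<forall>l. i \<le> l \<and> l < Suc i \<longrightarrow> ds ! l" using less.prems by (auto simp: less_Suc_eq_le dest: le_antisym)
  show ?case
  proof (cases "Suc i = length ds")
    case True
    show ?thesis
    proof (intro exI[of _ "Suc i"] conjI)
      show "\<forall>l. i \<le> l \<and> l < Suc i \<longrightarrow> ds ! l" by (rule r1)
    qed (use e less.prems True in auto)
  next
    case F: False
    show ?thesis
    proof (cases "ds ! Suc i")
      case True
      have "length ds - Suc i < length ds - i" "Suc i < length ds" using F less.prems by auto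
      from less.hyps[OF this] True obtain k where
        k: "Suc i < k" "k \<le> length ds" "(vs ! Suc i, vs ! k) \<in> E\<^sup>*"
          "\<forall>l. Suc i \<le> l \<and> l < k \<longrightarrow> ds ! l" "k = length ds \<or> is_collider ds k" by auto
      show ?thesis
      proof (intro exI[of _ k] conjI)
        show "(vs ! i, vs ! k) \<in> E\<^sup>*" using e k(3) by (meson converse_rtrancl_into_rtrancl)
        show "\<forall>l. i \<le> l \<and> l < k \<longrightarrow> ds ! l" using k(4) less.prems by (metis Suc_leI le_neq_implies_less)
      qed (use k in auto)
    next
      case False
      then show ?thesis using e less.prems F r1 unfolding is_collider_def
        by (intro exI[of _ "Suc i"]) auto
    qed
  qed
qed

lemma left_run:
  assumes ed: "\<forall>i < length ds. (if ds ! i then (vs ! i, vs ! Suc i) \<in> E else (vs ! Suc i, vs ! i) \<in> E)"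
  shows "0 < i \<Longrightarrow> i \<le> length ds \<Longrightarrow> \<not> ds ! (i - 1) \<Longrightarrow> \<exists>k<i. (vs ! i, vs ! k) \<in> E\<^sup>* \<and> (k = 0 \<or> is_collider ds k)"
proof (induction i rule: less_induct)
  case (less i)
  have e: "(vs ! i, vs ! (i - 1)) \<in> E" using ed[rule_format, of "i - 1"] less.prems by auto
  show ?case
  proof (cases "i - 1 = 0")
    case True
    then show ?thesis using e less.prems by (intro exI[of _ 0]) auto
  next
    case F: False
    show ?thesis
    proof (cases "ds ! (i - 1 - 1)")
      case False
      have "i - 1 < i" "0 < i - 1" "i - 1 \<le> length ds" using F less.prems by auto
      from less.IH[OF this] False obtain k where
        k: "k < i - 1" "(vs ! (i - 1), vs ! k) \<in> E\<^sup>*" "k = 0 \<or> is_collider ds k" by auto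
      show ?thesis using k e by (intro exI[of _ k]) (auto intro: converse_rtrancl_into_rtrancl)
    next
      case True
      then show ?thesis using e less.prems F unfolding is_collider_def
        by (intro exI[of _ "i - 1"]) auto
    qed
  qed
qed

lemma dwalk_concat:
  assumes w1: "dwalk E Z vs1 ds1" and w2: "dwalk E Z vs2 ds2" and lh: "last vs1 = hd vs2"
    and J: "if last ds1 \<and> \<not> hd ds2 then (\<exists>z\<in>Z. anc E (last vs1) z) else last vs1 \<notin> Z"
  shows "dwalk E Z (vs1 @ tl vs2) (ds1 @ ds2)"
proof -
  define m1 where "m1 = length ds1"
  define m2 where "m2 = length ds2"
  have L1: "length vs1 = Suc m1" "m1 \<ge> 1" using w1 unfolding dwalk_def m1_def by auto
  have L2: "length vs2 = Suc m2" "m2 \<ge> 1" using w2 unfolding dwalk_def m2_def by auto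
  have Lv: "length (vs1 @ tl vs2) = Suc (m1 + m2)" using L1 L2 by simp
  have Ld: "length (ds1 @ ds2) = m1 + m2" by (simp add: m1_def m2_def)
  have ne: "vs1 \<noteq> []" "vs2 \<noteq> []" "ds1 \<noteq> []" "ds2 \<noteq> []" using L1 L2 m1_def m2_def by auto
  have lv1: "last vs1 = vs1 ! m1" using L1 ne by (simp add: last_conv_nth)
  have hv2: "hd vs2 = vs2 ! 0" using L2 ne by (simp add: hd_conv_nth)
  have VA: "(vs1 @ tl vs2) ! p = vs1 ! p" if "p \<le> m1" for p
    using that L1 by (simp add: nth_append)
  have VB: "(vs1 @ tl vs2) ! p = vs2 ! (p - m1)" if "m1 \<le> p" "p \<le> m1 + m2" for p
  proof (cases "p = m1")
    case True thus ?thesis using VA[of p] lv1 hv2 lh by simp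
  next
    case False
    hence "(vs1 @ tl vs2) ! p = tl vs2 ! (p - Suc m1)" using that L1 by (simp add: nth_append)
    also have "\<dots> = vs2 ! (p - m1)" using that False L2 by (simp add: nth_tl Suc_diff_Suc)
    finally show ?thesis .
  qed
  have DA: "(ds1 @ ds2) ! p = ds1 ! p" if "p < m1" for p using that by (simp add: nth_append m1_def)
  have DB: "(ds1 @ ds2) ! p = ds2 ! (p - m1)" if "m1 \<le> p" for p using that by (simp add: nth_append m1_def)
  have ed1: "\<And>i. i < m1 \<Longrightarrow> (if ds1 ! i then (vs1 ! i, vs1 ! Suc i) \<in> E else (vs1 ! Suc i, vs1 ! i) \<in> E)"
    using w1 unfolding dwalk_def m1_def by auto
  have ed2: "\<And>i. i < m2 \<Longrightarrow> (if ds2 ! i then (vs2 ! i, vs2 ! Suc i) \<in> E else (vs2 ! Suc i, vs2 ! i) \<in> E)"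
    using w2 unfolding dwalk_def m2_def by auto
  have in1: "\<And>i. 0 < i \<Longrightarrow> i < m1 \<Longrightarrow> (if is_collider ds1 i then (\<exists>z\<in>Z. anc E (vs1 ! i) z) else vs1 ! i \<notin> Z)"
    using w1 L1 unfolding dwalk_def by auto
  have in2: "\<And>i. 0 < i \<Longrightarrow> i < m2 \<Longrightarrow> (if is_collider ds2 i then (\<exists>z\<in>Z. anc E (vs2 ! i) z) else vs2 ! i \<notin> Z)"
    using w2 L2 unfolding dwalk_def by auto
  have E: "\<forall>i < length (ds1 @ ds2). (if (ds1 @ ds2) ! i then ((vs1 @ tl vs2) ! i, (vs1 @ tl vs2) ! Suc i) \<in> E
            else ((vs1 @ tl vs2) ! Suc i, (vs1 @ tl vs2) ! i) \<in> E)"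
  proof (intro allI impI)
    fix i assume i: "i < length (ds1 @ ds2)"
    show "(if (ds1 @ ds2) ! i then ((vs1 @ tl vs2) ! i, (vs1 @ tl vs2) ! Suc i) \<in> E
            else ((vs1 @ tl vs2) ! Suc i, (vs1 @ tl vs2) ! i) \<in> E)"
    proof (cases "i < m1")
      case True
      thus ?thesis using ed1[OF True] VA[of i] VA[of "Suc i"] DA[OF True] by simp
    next
      case False
      hence "Suc i - m1 = Suc (i - m1)" "i - m1 < m2" using i Ld by auto
      thus ?thesis using ed2[of "i - m1"] VB[of i] VB[of "Suc i"] DB[of i] False i Ld by simp
    qed
  qed
  have C: "\<forall>i. 0 < i \<and> i < length (vs1 @ tl vs2) - 1 \<longrightarrow>
        (if is_collider (ds1 @ ds2) i then (\<exists>z\<in>Z. anc E ((vs1 @ tl vs2) ! i) z) else (vs1 @ tl vs2) ! i \<notin> Z)"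
  proof (intro allI impI)
    fix i assume i: "0 < i \<and> i < length (vs1 @ tl vs2) - 1"
    show "(if is_collider (ds1 @ ds2) i then (\<exists>z\<in>Z. anc E ((vs1 @ tl vs2) ! i) z) else (vs1 @ tl vs2) ! i \<notin> Z)"
    proof (cases "i < m1")
      case True
      have "is_collider (ds1 @ ds2) i = is_collider ds1 i" unfolding is_collider_def
        using DA[of i] DA[of "i - 1"] True by auto
      thus ?thesis using in1[of i] i True VA[of i] by simp
    next
      case F: False
      show ?thesis
      proof (cases "i = m1")
        case True
        have "last ds1 = ds1 ! (m1 - 1)" using ne by (simp add: last_conv_nth m1_def)
        moreover have "hd ds2 = ds2 ! 0" using ne by (simp add: hd_conv_nth m2_def)
        ultimately have "is_collider (ds1 @ ds2) i = (last ds1 \<and> \<not> hd ds2)" unfolding is_collider_def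
          using DA[of "i - 1"] DB[of i] True L1 by auto
        moreover have "(vs1 @ tl vs2) ! i = last vs1" using VA[of i] True lv1 by simp
        ultimately show ?thesis using J by simp
      next
        case False
        hence ii: "m1 < i" using F by simp
        have "is_collider (ds1 @ ds2) i = is_collider ds2 (i - m1)" unfolding is_collider_def
          using DB[of i] DB[of "i - 1"] ii by (auto simp: diff_diff_left)
        thus ?thesis using in2[of "i - m1"] i ii VB[of i] Lv by simp
      qed
    qed
  qed
  show ?thesis unfolding dwalk_def using E C Lv Ld L1 L2 by simp
qed

lemma walk_to_path:
  "dwalk E Z vs ds \<Longrightarrow> hd vs \<noteq> last vs \<Longrightarrow> d_connected E (hd vs) (last vs) Z"
proof (induction "length vs" arbitrary: vs ds rule: less_induct)
  case less
  show ?case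
  proof (cases "distinct vs")
    case True
    then show ?thesis using less.prems unfolding d_connected_iff by blast
  next
    case False
    then obtain i j where ij0: "i < length vs" "j < length vs" "i \<noteq> j" "vs ! i = vs ! j"
      by (auto simp: distinct_conv_nth)
    then obtain i j where ij: "i < j" "j < length vs" "vs ! i = vs ! j"
      by (metis linorder_neqE_nat)
    define m where "m = length ds"
    have L: "length vs = Suc m" "m \<ge> 1" using less.prems unfolding dwalk_def m_def by auto
    have ed: "\<forall>i < length ds. (if ds ! i then (vs ! i, vs ! Suc i) \<in> E else (vs ! Suc i, vs ! i) \<in> E)"
      using less.prems unfolding dwalk_def by auto
    have inn: "\<And>i. 0 < i \<Longrightarrow> i < m \<Longrightarrow> (if is_collider ds i then (\<exists>z\<in>Z. anc E (vs ! i) z) else vs ! i \<notin> Z)"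
      using less.prems L unfolding dwalk_def by auto
    define vs' where "vs' = take (Suc i) vs @ drop (Suc j) vs"
    define ds' where "ds' = take i ds @ drop j ds"
    have jm: "j \<le> m" using ij L by auto
    have Lv': "length vs' = Suc (i + (m - j))" unfolding vs'_def using ij L by auto
    have Ld': "length ds' = i + (m - j)" unfolding ds'_def using ij L m_def by auto
    have VA: "vs' ! p = vs ! p" if "p \<le> i" for p
      unfolding vs'_def using that ij by (simp add: nth_append)
    have VB: "vs' ! p = vs ! (p - i + j)" if "i \<le> p" "p \<le> i + (m - j)" for p
    proof (cases "p = i")
      case True thus ?thesis using VA[of p] ij by simp
    next
      case False
      hence "vs' ! p = drop (Suc j) vs ! (p - Suc i)" unfolding vs'_def using that ij by (simp add: nth_append)
      also have "Suc j + (p - Suc i) = p - i + j" using that False ij by auto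
      hence "drop (Suc j) vs ! (p - Suc i) = vs ! (p - i + j)" using that False ij L by simp
      finally show ?thesis .
    qed
    have DA: "ds' ! p = ds ! p" if "p < i" for p
      unfolding ds'_def using that ij L m_def by (simp add: nth_append)
    have DB: "ds' ! p = ds ! (p - i + j)" if "i \<le> p" "p < i + (m - j)" for p
      unfolding ds'_def using that ij L m_def by (simp add: nth_append add.commute)
    have ne: "vs' \<noteq> []" "vs \<noteq> []" using Lv' L by auto
    have hd': "hd vs' = hd vs"
      using VA[of 0] ne by (simp add: hd_conv_nth)
    from ne have last': "last vs' = last vs"
      using VB[of "i + (m - j)"] Lv' L jm by (simp add: last_conv_nth)
    have len2: "length vs' \<ge> 2"
    proof (rule ccontr)
      assume "\<not> 2 \<le> length vs'"
      hence "length vs' = 1" using Lv' by auto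
      hence "hd vs' = last vs'" by (cases vs') auto
      thus False using hd' last' less.prems by simp
    qed
    have E': "\<forall>p < length ds'. (if ds' ! p then (vs' ! p, vs' ! Suc p) \<in> E else (vs' ! Suc p, vs' ! p) \<in> E)"
    proof (intro allI impI)
      fix p assume p: "p < length ds'"
      show "(if ds' ! p then (vs' ! p, vs' ! Suc p) \<in> E else (vs' ! Suc p, vs' ! p) \<in> E)"
      proof (cases "p < i")
        case True
        thus ?thesis using ed[rule_format, of p] VA[of p] VA[of "Suc p"] DA[of p] ij L m_def by simp
      next
        case False
        define q where "q = p - i + j"
        have q: "Suc p - i + j = Suc q" "q < length ds" using p Ld' m_def jm False unfolding q_def by auto
        have "vs' ! p = vs ! q" "vs' ! Suc p = vs ! Suc q" "ds' ! p = ds ! q"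
          using VB[of p] VB[of "Suc p"] DB[of p] p Ld' False q(1) unfolding q_def by auto
        thus ?thesis using ed[rule_format, OF q(2)] by simp
      qed
    qed
    have C': "\<forall>p. 0 < p \<and> p < length vs' - 1 \<longrightarrow>
        (if is_collider ds' p then (\<exists>z\<in>Z. anc E (vs' ! p) z) else vs' ! p \<notin> Z)"
    proof (intro allI impI)
      fix p assume p: "0 < p \<and> p < length vs' - 1"
      show "(if is_collider ds' p then (\<exists>z\<in>Z. anc E (vs' ! p) z) else vs' ! p \<notin> Z)"
      proof (cases "p < i")
        case True
        have "is_collider ds' p = is_collider ds p" unfolding is_collider_def
          using DA[of p] DA[of "p - 1"] True by auto
        thus ?thesis using inn[of p] p True VA[of p] ij L by simp
      next
        case F: False
        show ?thesis
        proof (cases "p = i")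
          case False
          hence pp: "i < p" using F by simp
          have "is_collider ds' p = is_collider ds (p - i + j)" unfolding is_collider_def
            using DB[of p] DB[of "p - 1"] pp p Lv' by (auto simp: Suc_diff_le)
          moreover have "p - i + j < m" "0 < p - i + j" using p pp Lv' jm by auto
          ultimately show ?thesis using inn[of "p - i + j"] p pp VB[of p] Lv' jm by auto
        next
          case True
          have i0: "0 < i" and jlt: "j < m" using p True Lv' by auto
          have cd: "is_collider ds' p = (ds ! (i - 1) \<and> \<not> ds ! j)" unfolding is_collider_def
            using DA[of "i - 1"] DB[of i] True i0 jlt by auto
          have vp: "vs' ! p = vs ! i" using VA[of p] True by simp
          show ?thesis
          proof (cases "ds ! (i - 1) \<and> \<not> ds ! j")
            case col: True
            have "\<exists>z\<in>Z. anc E (vs ! i) z"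
            proof (cases "is_collider ds i")
              case True
              thus ?thesis using inn[of i] i0 ij jlt by auto
            next
              case False
              hence di: "ds ! i" using col unfolding is_collider_def by auto
              obtain k where k: "i < k" "k \<le> length ds" "(vs ! i, vs ! k) \<in> E\<^sup>*"
                "\<forall>l. i \<le> l \<and> l < k \<longrightarrow> ds ! l" "k = length ds \<or> is_collider ds k"
                using right_run[OF ed, of i] di ij jlt m_def by auto
              have "k \<le> j" using k(4) col ij by (metis less_imp_le_nat not_le)
              hence kc: "is_collider ds k" "k < m" using k(5) jlt m_def by auto
              then obtain z where "z \<in> Z" "anc E (vs ! k) z" using inn[of k] k(1) by auto
              thus ?thesis using k(3) unfolding anc_def by (meson rtrancl_trans)
            qed
            thus ?thesis using cd col vp by simp
          next
            case ncol: False
            have "vs ! i \<notin> Z"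
            proof (cases "ds ! (i - 1)")
              case False
              thus ?thesis using inn[of i] i0 ij jlt unfolding is_collider_def by auto
            next
              case True
              hence "ds ! j" using ncol by simp
              thus ?thesis using inn[of j] i0 ij jlt unfolding is_collider_def by auto
            qed
            thus ?thesis using cd ncol vp by auto
          qed
        qed
      qed
    qed
    have w': "dwalk E Z vs' ds'" unfolding dwalk_def using len2 Lv' Ld' E' C' by simp
    have "length vs' < length vs" using Lv' L ij jm by auto
    from less.hyps[OF this w'] hd' last' less.prems show ?thesis by simp
  qed
qed



lemma rt_walk:
  assumes "(x, y) \<in> E\<^sup>*"
  shows "\<exists>ws. ws \<noteq> [] \<and> hd ws = x \<and> last ws = y \<and> (\<forall>i. Suc i < length ws \<longrightarrow> (ws ! i, ws ! Suc i) \<in> E)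
           \<and> (\<forall>v\<in>set ws. (x, v) \<in> E\<^sup>*)"
  using assms
proof (induction rule: converse_rtrancl_induct)
  case base
  show ?case by (intro exI[of _ "[y]"]) auto
next
  case (step x x')
  then obtain ws where ws: "ws \<noteq> []" "hd ws = x'" "last ws = y"
    "\<forall>i. Suc i < length ws \<longrightarrow> (ws ! i, ws ! Suc i) \<in> E" "\<forall>v\<in>set ws. (x', v) \<in> E\<^sup>*" by blast
  show ?case
  proof (intro exI[of _ "x # ws"] conjI allI impI ballI)
    fix i assume i: "Suc i < length (x # ws)"
    show "((x # ws) ! i, (x # ws) ! Suc i) \<in> E"
    proof (cases i)
      case 0 thus ?thesis using ws step by (simp add: hd_conv_nth)
    next
      case (Suc j) thus ?thesis using ws i by simp
    qed
  next
    fix v assume "v \<in> set (x # ws)"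
    thus "(x, v) \<in> E\<^sup>*" using ws step by (auto intro: converse_rtrancl_into_rtrancl)
  qed (use ws in auto)
qed

lemma dir_walk:
  assumes "length ws \<ge> 2" "\<forall>i. Suc i < length ws \<longrightarrow> (ws ! i, ws ! Suc i) \<in> E" "\<forall>v\<in>set ws. v \<notin> Z"
  shows "dwalk E Z ws (replicate (length ws - 1) True)"
  using assms unfolding dwalk_def is_collider_def by auto

lemma d_connected_sym: "d_connected E a b Z \<Longrightarrow> d_connected E b a Z"
  unfolding d_connected_iff
  by (metis dwalk_rev distinct_rev hd_rev last_rev)

lemma p_adj_sym: "p_adj E a b \<Longrightarrow> p_adj E b a"
  unfolding p_adj_def by blast

lemma padj_conn_aux:
  assumes irr: "\<forall>x. (x, x) \<notin> E" and ac: "(a, c) \<in> E" and cb: "anc E c b" and ab: "a \<noteq> b"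
    and aZ: "a \<notin> Z" and nz: "\<not> (\<exists>z\<in>Z. anc E c z)"
  shows "d_connected E a b Z"
proof -
  obtain ws where ws: "ws \<noteq> []" "hd ws = c" "last ws = b" "\<forall>i. Suc i < length ws \<longrightarrow> (ws ! i, ws ! Suc i) \<in> E"
    "\<forall>v\<in>set ws. (c, v) \<in> E\<^sup>*" using rt_walk[of c b E] cb unfolding anc_def by blast
  have l2: "length (a # ws) \<ge> 2" using ws by (cases ws) auto
  have ed: "\<forall>i. Suc i < length (a # ws) \<longrightarrow> ((a # ws) ! i, (a # ws) ! Suc i) \<in> E"
  proof (intro allI impI)
    fix i assume i: "Suc i < length (a # ws)"
    show "((a # ws) ! i, (a # ws) ! Suc i) \<in> E"
      using ws ac i by (cases i) (auto simp: hd_conv_nth)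
  qed
  have nZ: "\<forall>v\<in>set (a # ws). v \<notin> Z" using ws aZ nz unfolding anc_def by auto
  have "dwalk E Z (a # ws) (replicate (length (a # ws) - 1) True)" by (rule dir_walk[OF l2 ed nZ])
  from walk_to_path[OF this] show ?thesis using ws ab by simp
qed

lemma padj_conn:
  assumes irr: "\<forall>x. (x, x) \<notin> E" and pa: "p_adj E a b" and aZ: "a \<notin> Z" and bZ: "b \<notin> Z"
  shows "d_connected E a b Z"
proof -
  have ab: "a \<noteq> b" using pa unfolding p_adj_def by auto
  consider "(a, b) \<in> E" | "(b, a) \<in> E" | c where "(a, c) \<in> E" "(b, c) \<in> E" "anc E c a \<or> anc E c b"
    using pa unfolding p_adj_def by blast
  then show ?thesis
  proof cases
    case 1
    have "dwalk E Z [a, b] [True]" using 1 unfolding dwalk_def by auto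
    thus ?thesis unfolding d_connected_iff using ab by (intro exI[of _ "[a, b]"]) auto
  next
    case 2
    have "dwalk E Z [a, b] [False]" using 2 unfolding dwalk_def by auto
    thus ?thesis unfolding d_connected_iff using ab by (intro exI[of _ "[a, b]"]) auto
  next
    case 3
    show ?thesis
    proof (cases "\<exists>z\<in>Z. anc E c z")
      case True
      have "dwalk E Z [a, c, b] [True, False]" unfolding dwalk_def is_collider_def
      proof (intro conjI allI impI)
        fix i assume "0 < i \<and> i < length [a, c, b] - 1"
        hence "i = 1" by auto
        thus "if [True, False] ! (i - 1) \<and> \<not> [True, False] ! i then \<exists>z\<in>Z. anc E ([a, c, b] ! i) z else [a, c, b] ! i \<notin> Z"
          using True by simp
      next
        fix i assume "i < length [True, False]"
        hence "i = 0 \<or> i = 1" by auto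
        thus "if [True, False] ! i then ([a, c, b] ! i, [a, c, b] ! Suc i) \<in> E else ([a, c, b] ! Suc i, [a, c, b] ! i) \<in> E"
          using 3 by auto
      qed auto
      moreover have "a \<noteq> c" "b \<noteq> c" using 3 irr by auto
      ultimately show ?thesis unfolding d_connected_iff using ab by (intro exI[of _ "[a, c, b]"]) auto
    next
      case False
      show ?thesis
      proof (cases "anc E c b")
        case True
        show ?thesis by (rule padj_conn_aux[OF irr 3(1) True ab aZ False])
      next
        case nb: False
        hence "anc E c a" using 3 by auto
        from padj_conn_aux[OF irr 3(2) this ab[symmetric] bZ False] show ?thesis by (rule d_connected_sym)
      qed
    qed
  qed
qed

lemma conn_closed:
  assumes dc: "d_connected E a c Z"
    and H: "\<forall>u v. v \<in> insert a (insert c Z) \<longrightarrow> anc E u v \<longrightarrow> u \<in> insert a (insert c Z)"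
  shows "(a, c) \<in> E \<or> (c, a) \<in> E \<or> (\<exists>d. (a, d) \<in> E \<and> (c, d) \<in> E \<and> (\<exists>z\<in>Z. anc E d z))"
proof -
  obtain vs ds where w: "dwalk E Z vs ds" "distinct vs" "hd vs = a" "last vs = c"
    using dc unfolding d_connected_iff by blast
  define m where "m = length ds"
  have L: "length vs = Suc m" "m \<ge> 1" using w unfolding dwalk_def m_def by auto
  have ne: "vs \<noteq> []" using L by auto
  have v0: "vs ! 0 = a" using w ne by (simp add: hd_conv_nth)
  have vm: "vs ! m = c" using w ne L by (simp add: last_conv_nth)
  have ed: "\<forall>i < length ds. (if ds ! i then (vs ! i, vs ! Suc i) \<in> E else (vs ! Suc i, vs ! i) \<in> E)"
    using w unfolding dwalk_def by auto
  have inn: "\<And>i. 0 < i \<Longrightarrow> i < m \<Longrightarrow> (if is_collider ds i then (\<exists>z\<in>Z. anc E (vs ! i) z) else vs ! i \<notin> Z)"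
    using w L unfolding dwalk_def by auto
  have reachk: "vs ! k \<in> insert a (insert c Z)" if "k = 0 \<or> k = m \<or> (0 < k \<and> k < m \<and> is_collider ds k)" and "anc E (vs ! i) (vs ! k)" for i k
  proof -
    have "\<exists>v \<in> insert a (insert c Z). anc E (vs ! k) v"
    proof -
      { assume "k = 0" hence ?thesis using v0 unfolding anc_def by auto }
      moreover { assume "k = m" hence ?thesis using vm unfolding anc_def by auto }
      moreover { assume "0 < k \<and> k < m \<and> is_collider ds k" hence ?thesis using inn[of k] by auto }
      ultimately show ?thesis using that by blast
    qed
    thus ?thesis using H by blast
  qed
  have allc: "is_collider ds i" if i: "0 < i" "i < m" for i
  proof (rule ccontr)
    assume nc: "\<not> is_collider ds i"
    hence nZ: "vs ! i \<notin> Z" using inn[OF i] by simp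
    have "\<exists>k. (k = 0 \<or> k = m \<or> (0 < k \<and> k < m \<and> is_collider ds k)) \<and> anc E (vs ! i) (vs ! k)"
    proof (cases "ds ! i")
      case True
      obtain k where k: "i < k" "k \<le> length ds" "(vs ! i, vs ! k) \<in> E\<^sup>*" "k = length ds \<or> is_collider ds k"
        using right_run[OF ed, of i] True i m_def by auto
      thus ?thesis using i m_def unfolding anc_def by (intro exI[of _ k]) auto
    next
      case False
      hence "\<not> ds ! (i - 1)" using nc unfolding is_collider_def by auto
      then obtain k where k: "k < i" "(vs ! i, vs ! k) \<in> E\<^sup>*" "k = 0 \<or> is_collider ds k"
        using left_run[OF ed, of i] i m_def by auto
      thus ?thesis using i unfolding anc_def by (intro exI[of _ k]) auto
    qed
    then obtain k where "(k = 0 \<or> k = m \<or> (0 < k \<and> k < m \<and> is_collider ds k))" "anc E (vs ! i) (vs ! k)" by blast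
    from reachk[OF this] have "vs ! k \<in> insert a (insert c Z)" .
    moreover have "anc E (vs ! i) (vs ! k)" by fact
    ultimately have "vs ! i \<in> insert a (insert c Z)" using H by blast
    hence "vs ! i = vs ! 0 \<or> vs ! i = vs ! m" using nZ v0 vm by auto
    thus False using w(2) i L by (auto simp: nth_eq_iff_index_eq)
  qed
  show ?thesis
  proof (cases "m = 1")
    case True
    thus ?thesis using ed[rule_format, of 0] v0 vm m_def by (auto split: if_splits)
  next
    case F: False
    show ?thesis
    proof (cases "m = 2")
      case True
      have "is_collider ds 1" using allc[of 1] True by simp
      hence "ds ! 0" "\<not> ds ! 1" unfolding is_collider_def by auto
      moreover have "ds \<noteq> []" using L m_def by auto
      ultimately have "(a, vs ! 1) \<in> E" "(c, vs ! 1) \<in> E"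
        using ed[rule_format, of 0] ed[rule_format, of 1] v0 vm True m_def by (auto simp: numeral_2_eq_2)
      moreover have "\<exists>z\<in>Z. anc E (vs ! 1) z" using inn[of 1] \<open>is_collider ds 1\<close> True by simp
      ultimately show ?thesis by blast
    next
      case False
      hence "m \<ge> 3" using F L by auto
      hence "is_collider ds 1" "is_collider ds 2" using allc[of 1] allc[of 2] by auto
      thus ?thesis unfolding is_collider_def by simp
    qed
  qed
qed

lemma conductor_conn_aux:
  assumes irr: "\<forall>x. (x, x) \<notin> E" and pab: "p_adj E a b" and pcb: "p_adj E c b" and ba: "anc E b a"
    and ac: "a \<noteq> c" and aZ: "a \<notin> Z" and bZ: "b \<notin> Z" and cZ: "c \<notin> Z"
  shows "d_connected E a c Z"
proof -
  have ab: "a \<noteq> b" using pab unfolding p_adj_def by auto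
  obtain vs2 ds2 where w2: "dwalk E Z vs2 ds2" "hd vs2 = b" "last vs2 = c"
    using padj_conn[OF irr p_adj_sym[OF pcb] bZ cZ] unfolding d_connected_iff by blast
  have l2: "length vs2 \<ge> 2" using w2 unfolding dwalk_def by auto
  have lastc: "last (vs1 @ tl vs2) = c" for vs1
  proof -
    have "tl vs2 \<noteq> []" using l2 by (cases vs2) auto
    thus ?thesis using w2 l2 by (cases vs2) auto
  qed
  have hda: "hd (vs1 @ tl vs2) = hd vs1" if "vs1 \<noteq> []" for vs1 using that by simp
  show ?thesis
  proof (cases "\<exists>z\<in>Z. anc E b z")
    case True
    obtain vs1 ds1 where w1: "dwalk E Z vs1 ds1" "hd vs1 = a" "last vs1 = b"
      using padj_conn[OF irr pab aZ bZ] unfolding d_connected_iff by blast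
    have "vs1 \<noteq> []" using w1 unfolding dwalk_def by auto
    have "dwalk E Z (vs1 @ tl vs2) (ds1 @ ds2)"
      by (rule dwalk_concat[OF w1(1) w2(1)]) (use w1 w2 True bZ in auto)
    from walk_to_path[OF this] show ?thesis using lastc hda \<open>vs1 \<noteq> []\<close> w1 ac by simp
  next
    case False
    obtain ws where ws: "ws \<noteq> []" "hd ws = b" "last ws = a" "\<forall>i. Suc i < length ws \<longrightarrow> (ws ! i, ws ! Suc i) \<in> E"
      "\<forall>v\<in>set ws. (b, v) \<in> E\<^sup>*" using rt_walk[of b a E] ba unfolding anc_def by blast
    have l: "length ws \<ge> 2"
    proof (rule ccontr)
      assume "\<not> 2 \<le> length ws"
      moreover have "length ws \<noteq> 0" using ws by simp
      ultimately have "length ws = 1" by linarith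
      then obtain x where "ws = [x]" by (auto simp: length_Suc_conv)
      thus False using ws ab by auto
    qed
    have nZ: "\<forall>v\<in>set ws. v \<notin> Z" using ws False unfolding anc_def by auto
    define ds1 where "ds1 = rev (map Not (replicate (length ws - 1) True))"
    have w1: "dwalk E Z (rev ws) ds1" unfolding ds1_def by (rule dwalk_rev[OF dir_walk[OF l ws(4) nZ]])
    have ld: "last ds1 = False" unfolding ds1_def using l by (cases "length ws - 1") auto
    have "dwalk E Z (rev ws @ tl vs2) (ds1 @ ds2)"
      by (rule dwalk_concat[OF w1 w2(1)]) (use ws w2 ld bZ in \<open>auto simp: last_rev hd_rev\<close>)
    from walk_to_path[OF this] show ?thesis using lastc hda[of "rev ws"] ws ac by (simp add: hd_rev)
  qed
qed

lemma conductor_conn: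
  assumes irr: "\<forall>x. (x, x) \<notin> E" and pab: "p_adj E a b" and pcb: "p_adj E c b" and ba: "anc E b a \<or> anc E b c"
    and ac: "a \<noteq> c" and aZ: "a \<notin> Z" and bZ: "b \<notin> Z" and cZ: "c \<notin> Z"
  shows "d_connected E a c Z"
  using ba
proof
  assume "anc E b a" thus ?thesis using conductor_conn_aux[OF irr pab pcb _ ac aZ bZ cZ] by blast
next
  assume "anc E b c" thus ?thesis using conductor_conn_aux[OF irr pcb pab _ ac[symmetric] cZ bZ aZ] d_connected_sym by blast
qed



lemma blk_props:
  assumes P: "partition_on {1..n} P" and x: "x \<in> {1..n}"
  shows "blk P x \<in> P" "x \<in> blk P x" "\<And>C. C \<in> P \<Longrightarrow> x \<in> C \<Longrightarrow> C = blk P x"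
proof -
  have ex: "\<exists>C. C \<in> P \<and> x \<in> C" using P x unfolding partition_on_def by auto
  have un: "C = D" if "C \<in> P" "x \<in> C" "D \<in> P" "x \<in> D" for C D
  proof (rule ccontr)
    assume "C \<noteq> D"
    hence "C \<inter> D = {}" using disjointD[OF partition_onD2[OF P] that(1) that(3)] by blast
    with that show False by blast
  qed
  have "\<exists>!C. C \<in> P \<and> x \<in> C" using ex un by blast
  hence th: "blk P x \<in> P \<and> x \<in> blk P x" unfolding blk_def by (rule theI')
  thus "blk P x \<in> P" "x \<in> blk P x" by auto
  show "\<And>C. C \<in> P \<Longrightarrow> x \<in> C \<Longrightarrow> C = blk P x" using th un by blast
qed

lemma POP_D:
  assumes "(P, \<pi>) \<in> POP n"
  shows "partition_on {1..n} P" "refl_on P \<pi>" "trans \<pi>" "antisym \<pi>" "\<pi> \<subseteq> P \<times> P"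
  using assms unfolding POP_def partial_order_on_def preorder_on_def by auto

lemma below_sub: assumes "partition_on {1..n} P" shows "below P \<pi> X \<subseteq> {1..n}"
  using assms unfolding below_def partition_on_def by auto

lemma below_iff:
  assumes P: "partition_on {1..n} P" and b: "b \<in> {1..n}"
  shows "b \<in> below P \<pi> X \<longleftrightarrow> (\<exists>x\<in>X. (blk P b, blk P x) \<in> \<pi>)"
proof
  assume "b \<in> below P \<pi> X"
  then obtain C where C: "C \<in> {C \<in> P. \<exists>x\<in>X. (C, blk P x) \<in> \<pi>}" "b \<in> C" unfolding below_def by (rule UnionE)
  hence "C = blk P b" using blk_props(3)[OF P b] by blast
  thus "\<exists>x\<in>X. (blk P b, blk P x) \<in> \<pi>" using C by blast
next
  assume a: "\<exists>x\<in>X. (blk P b, blk P x) \<in> \<pi>"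
  have "blk P b \<in> {C \<in> P. \<exists>x\<in>X. (C, blk P x) \<in> \<pi>}" using a blk_props(1)[OF P b] by blast
  thus "b \<in> below P \<pi> X" unfolding below_def using blk_props(2)[OF P b] by (rule UnionI)
qed

lemma below_self:
  assumes "(P, \<pi>) \<in> POP n" "X \<subseteq> {1..n}"
  shows "X \<subseteq> below P \<pi> X"
proof
  fix x assume x: "x \<in> X"
  hence xn: "x \<in> {1..n}" using assms by auto
  have "(blk P x, blk P x) \<in> \<pi>" using POP_D(2)[OF assms(1)] blk_props(1)[OF POP_D(1)[OF assms(1)] xn]
    unfolding refl_on_def by auto
  thus "x \<in> below P \<pi> X" using below_iff[OF POP_D(1)[OF assms(1)] xn] x by auto
qed


definition sccR :: "(nat \<times> nat) set \<Rightarrow> nat \<Rightarrow> nat \<Rightarrow> bool" where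
  "sccR E i j \<longleftrightarrow> i = j \<or> ((i, j) \<in> E\<^sup>+ \<and> (j, i) \<in> E\<^sup>+)"

definition scc :: "nat \<Rightarrow> (nat \<times> nat) set \<Rightarrow> nat \<Rightarrow> nat set" where
  "scc n E i = {j \<in> {1..n}. sccR E i j}"

lemma sccR_sym: "sccR E i j \<Longrightarrow> sccR E j i" unfolding sccR_def by auto
lemma sccR_trans: "sccR E i j \<Longrightarrow> sccR E j k \<Longrightarrow> sccR E i k" unfolding sccR_def by (auto intro: trancl_trans)

lemma scc_partition_eq: "scc_partition n E = {scc n E i | i. i \<in> {1..n}}"
  unfolding scc_partition_def scc_def sccR_def by simp

lemma scc_self: "i \<in> {1..n} \<Longrightarrow> i \<in> scc n E i" unfolding scc_def sccR_def by auto

lemma scc_eq: assumes "x \<in> scc n E i" shows "scc n E i = scc n E x"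
proof -
  have ix: "sccR E i x" using assms unfolding scc_def by simp
  have "sccR E i j \<longleftrightarrow> sccR E x j" for j
    using sccR_trans[OF ix, of j] sccR_trans[OF sccR_sym[OF ix], of j] by blast
  thus ?thesis unfolding scc_def by simp
qed

lemma scc_part: "partition_on {1..n} (scc_partition n E)"
  unfolding scc_partition_eq partition_on_def disjoint_def
proof (intro conjI ballI impI)
  show "\<Union> {scc n E i |i. i \<in> {1..n}} = {1..n}"
  proof
    show "\<Union> {scc n E i |i. i \<in> {1..n}} \<subseteq> {1..n}" by (auto simp: scc_def)
    show "{1..n} \<subseteq> \<Union> {scc n E i |i. i \<in> {1..n}}"
    proof
      fix x assume "x \<in> {1..n}"
      thus "x \<in> \<Union> {scc n E i |i. i \<in> {1..n}}" using scc_self[of x n E] by blast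
    qed
  qed
  show "{} \<notin> {scc n E i |i. i \<in> {1..n}}" using scc_self by blast
next
  fix A B assume A: "A \<in> {scc n E i |i. i \<in> {1..n}}" and B: "B \<in> {scc n E i |i. i \<in> {1..n}}" and ne: "A \<noteq> B"
  obtain i j where ij: "A = scc n E i" "B = scc n E j" using A B by blast
  show "A \<inter> B = {}"
  proof (rule ccontr)
    assume "A \<inter> B \<noteq> {}"
    then obtain y where "y \<in> scc n E i" "y \<in> scc n E j" using ij by blast
    hence "scc n E i = scc n E j" using scc_eq[of y n E i] scc_eq[of y n E j] by simp
    thus False using ne ij by simp
  qed
qed

lemma scc_mem: "x \<in> {1..n} \<Longrightarrow> scc n E x \<in> scc_partition n E"
  using scc_partition_eq by auto

lemma blk_scc: assumes x: "x \<in> {1..n}" shows "blk (scc_partition n E) x = scc n E x"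
proof -
  have "scc n E x = blk (scc_partition n E) x"
    by (rule blk_props(3)[OF scc_part x scc_mem[OF x] scc_self[OF x]])
  thus ?thesis by simp
qed

lemma scc_order_iff:
  assumes x: "x \<in> {1..n}" and y: "y \<in> {1..n}"
  shows "(scc n E x, scc n E y) \<in> scc_order n E \<longleftrightarrow> anc E x y"
proof
  assume "(scc n E x, scc n E y) \<in> scc_order n E"
  hence "scc n E x = scc n E y \<or> (\<exists>p\<in>scc n E x. \<exists>q\<in>scc n E y. (p, q) \<in> E\<^sup>+)" unfolding scc_order_def by auto
  thus "anc E x y"
  proof
    assume "scc n E x = scc n E y"
    hence "y \<in> scc n E x" using scc_self[OF y] by auto
    thus ?thesis unfolding scc_def sccR_def anc_def by auto
  next
    assume "\<exists>p\<in>scc n E x. \<exists>q\<in>scc n E y. (p, q) \<in> E\<^sup>+"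
    then obtain p q where "sccR E x p" "sccR E y q" "(p, q) \<in> E\<^sup>+" unfolding scc_def by auto
    hence "(x, p) \<in> E\<^sup>*" "(q, y) \<in> E\<^sup>*" "(p, q) \<in> E\<^sup>*" unfolding sccR_def by auto
    thus ?thesis unfolding anc_def by (meson rtrancl_trans)
  qed
next
  assume a: "anc E x y"
  show "(scc n E x, scc n E y) \<in> scc_order n E"
  proof (cases "x = y")
    case True thus ?thesis using scc_mem[OF x] unfolding scc_order_def by auto
  next
    case False
    hence "(x, y) \<in> E\<^sup>+" using a unfolding anc_def by (simp add: rtrancl_eq_or_trancl)
    thus ?thesis using scc_mem[OF x] scc_mem[OF y] scc_self[OF x] scc_self[OF y] unfolding scc_order_def by blast
  qed
qed

lemma scc_partition_cases: "C \<in> scc_partition n E \<Longrightarrow> \<exists>x\<in>{1..n}. C = scc n E x"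
  using scc_partition_eq by auto

lemma s0_POP: "(scc_partition n E, scc_order n E) \<in> POP n"
proof -
  have sub: "scc_order n E \<subseteq> scc_partition n E \<times> scc_partition n E" unfolding scc_order_def by auto
  have refl: "refl_on (scc_partition n E) (scc_order n E)" unfolding refl_on_def scc_order_def by auto
  have tr: "trans (scc_order n E)"
  proof (rule transI)
    fix A B C assume ab: "(A, B) \<in> scc_order n E" and bc: "(B, C) \<in> scc_order n E"
    have "A \<in> scc_partition n E" "B \<in> scc_partition n E" "C \<in> scc_partition n E" using ab bc sub by auto
    then obtain x y z where xyz: "x \<in> {1..n}" "y \<in> {1..n}" "z \<in> {1..n}" "A = scc n E x" "B = scc n E y" "C = scc n E z"
      using scc_partition_cases by metis
    hence "anc E x y" "anc E y z" using ab bc scc_order_iff by auto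
    hence "anc E x z" unfolding anc_def by auto
    thus "(A, C) \<in> scc_order n E" using xyz scc_order_iff by auto
  qed
  have an: "antisym (scc_order n E)"
  proof (rule antisymI)
    fix A B assume ab: "(A, B) \<in> scc_order n E" and ba: "(B, A) \<in> scc_order n E"
    have "A \<in> scc_partition n E" "B \<in> scc_partition n E" using ab sub by auto
    then obtain x y where xy: "x \<in> {1..n}" "y \<in> {1..n}" "A = scc n E x" "B = scc n E y"
      using scc_partition_cases by metis
    hence "anc E x y" "anc E y x" using ab ba scc_order_iff by auto
    hence "sccR E x y" unfolding sccR_def anc_def by (auto simp: rtrancl_eq_or_trancl)
    hence "y \<in> scc n E x" using xy unfolding scc_def by auto
    thus "A = B" using xy scc_eq by auto
  qed
  show ?thesis unfolding POP_def partial_order_on_def preorder_on_def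
    using scc_part sub refl tr an by auto
qed

lemma below0:
  assumes En: "E \<subseteq> {1..n} \<times> {1..n}" and X: "X \<subseteq> {1..n}"
  shows "below (scc_partition n E) (scc_order n E) X = {v \<in> {1..n}. \<exists>x\<in>X. anc E v x}"
proof -
  have "v \<in> below (scc_partition n E) (scc_order n E) X \<longleftrightarrow> (\<exists>x\<in>X. anc E v x)" if v: "v \<in> {1..n}" for v
  proof -
    have "v \<in> below (scc_partition n E) (scc_order n E) X \<longleftrightarrow>
      (\<exists>x\<in>X. (blk (scc_partition n E) v, blk (scc_partition n E) x) \<in> scc_order n E)"
      by (rule below_iff[OF scc_part v])
    also have "\<dots> \<longleftrightarrow> (\<exists>x\<in>X. anc E v x)"
    proof (intro bex_cong refl)
      fix x assume "x \<in> X"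
      hence x: "x \<in> {1..n}" using X by auto
      show "(blk (scc_partition n E) v, blk (scc_partition n E) x) \<in> scc_order n E \<longleftrightarrow> anc E v x"
        using blk_scc[OF v] blk_scc[OF x] scc_order_iff[OF v x] by simp
    qed
    finally show ?thesis .
  qed
  thus ?thesis using below_sub[OF scc_part, of n E "scc_order n E" X] by auto
qed

lemma anc_closed:
  assumes En: "E \<subseteq> {1..n} \<times> {1..n}" and X: "X \<subseteq> {1..n}"
    and v: "v \<in> {w \<in> {1..n}. \<exists>x\<in>X. anc E w x}" and uv: "anc E u v"
  shows "u \<in> {w \<in> {1..n}. \<exists>x\<in>X. anc E w x}"
proof -
  have "u \<in> {1..n}"
  proof (cases "u = v")
    case True thus ?thesis using v by auto
  next
    case False
    then obtain w where "(u, w) \<in> E" using uv unfolding anc_def by (meson converse_rtranclE)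
    thus ?thesis using En by auto
  qed
  moreover have "\<exists>x\<in>X. anc E u x" using v uv unfolding anc_def by (auto intro: rtrancl_trans)
  ultimately show ?thesis by auto
qed



definition PA :: "nat \<Rightarrow> (nat \<times> nat) set \<Rightarrow> (nat \<times> nat) set" where
  "PA n E = {(a, b). a \<in> {1..n} \<and> b \<in> {1..n} \<and> p_adj E a b}"

definition CD :: "nat \<Rightarrow> (nat \<times> nat) set \<Rightarrow> (nat \<times> nat \<times> nat) set" where
  "CD n E = {(a, b, c). a \<in> {1..n} \<and> b \<in> {1..n} \<and> c \<in> {1..n} \<and> a \<noteq> b \<and> b \<noteq> c \<and> a \<noteq> c \<and>
      p_adj E a b \<and> p_adj E c b \<and> \<not> p_adj E a c \<and> (anc E b a \<or> anc E b c)}"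

lemma E1_mem: "(a, b) \<in> E1 n E (P, \<pi>) \<longleftrightarrow> a \<in> {1..n} \<and> b \<in> {1..n} \<and> a \<noteq> b \<and> d_connected E a b (below P \<pi> {a, b} - {a, b})"
  by (simp add: E1_def dsep_def)

lemma E2_mem: "(a, b, c) \<in> E2 n E (P, \<pi>) \<longleftrightarrow> a \<in> {1..n} \<and> b \<in> {1..n} \<and> c \<in> {1..n} \<and> a \<noteq> b \<and> b \<noteq> c \<and> a \<noteq> c \<and>
        (a, b) \<in> E1 n E (P, \<pi>) \<and> (c, b) \<in> E1 n E (P, \<pi>) \<and> (a, c) \<notin> E1 n E (P, \<pi>) \<and>
        (\<exists>x\<in>{a, c}. (blk P b, blk P x) \<in> \<pi>)"
  by (simp add: E2_def)

lemma E3_mem: "(a, b, c) \<in> E3 n E (P, \<pi>) \<longleftrightarrow> a \<in> {1..n} \<and> b \<in> {1..n} \<and> c \<in> {1..n} \<and> a \<noteq> b \<and> b \<noteq> c \<and> a \<noteq> c \<and>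
        (a, b) \<in> E1 n E (P, \<pi>) \<and> (c, b) \<in> E1 n E (P, \<pi>) \<and> (a, c) \<notin> E1 n E (P, \<pi>) \<and>
        d_connected E a c (below P \<pi> {a, b, c} - {a, c})"
  by (simp add: E3_def dsep_def)

lemma PA_mem: "(a, b) \<in> PA n E \<longleftrightarrow> a \<in> {1..n} \<and> b \<in> {1..n} \<and> p_adj E a b"
  by (simp add: PA_def)

lemma CD_mem: "(a, b, c) \<in> CD n E \<longleftrightarrow> a \<in> {1..n} \<and> b \<in> {1..n} \<and> c \<in> {1..n} \<and> a \<noteq> b \<and> b \<noteq> c \<and> a \<noteq> c \<and>
      p_adj E a b \<and> p_adj E c b \<and> \<not> p_adj E a c \<and> (anc E b a \<or> anc E b c)"
  by (simp add: CD_def)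

lemma PN_mem: "(a, b, c) \<in> perfect_nonconductors n E \<longleftrightarrow> a \<in> {1..n} \<and> b \<in> {1..n} \<and> c \<in> {1..n} \<and>
      a \<noteq> c \<and> \<not> p_adj E a c \<and> p_adj E a b \<and> p_adj E c b \<and>
      \<not> anc E b a \<and> \<not> anc E b c \<and>
      (\<exists>d. (a, d) \<in> E \<and> (c, d) \<in> E \<and> anc E d b)"
  by (simp add: perfect_nonconductors_def)

lemma E1_fin: "E1 n E s \<subseteq> {1..n} \<times> {1..n}"
  by (cases s) (auto simp: E1_def)
lemma E2_fin: "E2 n E s \<subseteq> {1..n} \<times> {1..n} \<times> {1..n}"
  by (cases s) (auto simp: E2_def)
lemma E3_fin: "E3 n E s \<subseteq> {1..n} \<times> {1..n} \<times> {1..n}"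
  by (cases s) (auto simp: E3_def)

lemma PA_sub_E1:
  assumes s: "(P, \<pi>) \<in> POP n" and irr: "\<forall>x. (x, x) \<notin> E"
  shows "PA n E \<subseteq> E1 n E (P, \<pi>)"
proof
  fix p assume "p \<in> PA n E"
  then obtain a b where p: "p = (a, b)" "a \<in> {1..n}" "b \<in> {1..n}" "p_adj E a b" unfolding PA_def by blast
  have "a \<noteq> b" using p(4) unfolding p_adj_def by simp
  moreover have "d_connected E a b (below P \<pi> {a, b} - {a, b})"
    by (rule padj_conn[OF irr p(4)]) auto
  ultimately show "p \<in> E1 n E (P, \<pi>)" using p E1_mem by simp
qed

lemma E1_s0_sub:
  assumes En: "E \<subseteq> {1..n} \<times> {1..n}"
  shows "E1 n E (scc_partition n E, scc_order n E) \<subseteq> PA n E"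
proof
  fix p assume p: "p \<in> E1 n E (scc_partition n E, scc_order n E)"
  obtain a b where ab: "p = (a, b)" by (cases p)
  have m: "a \<in> {1..n}" "b \<in> {1..n}" "a \<noteq> b"
    "d_connected E a b (below (scc_partition n E) (scc_order n E) {a, b} - {a, b})"
    using p ab E1_mem by auto
  define An where "An = {v \<in> {1..n}. \<exists>x\<in>{a, b}. anc E v x}"
  have bA: "below (scc_partition n E) (scc_order n E) {a, b} = An" unfolding An_def
    by (rule below0[OF En]) (use m in auto)
  have aA: "a \<in> An" "b \<in> An" unfolding An_def anc_def using m by auto
  have ins: "insert a (insert b (An - {a, b})) = An" using aA by auto
  have H: "\<forall>u v. v \<in> insert a (insert b (An - {a, b})) \<longrightarrow> anc E u v \<longrightarrow> u \<in> insert a (insert b (An - {a, b}))"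
  proof -
    have Xs: "{a, b} \<subseteq> {1..n}" using m by simp
    have "\<forall>u v. v \<in> An \<longrightarrow> anc E u v \<longrightarrow> u \<in> An"
    proof (intro allI impI)
      fix u v assume "v \<in> An" "anc E u v"
      thus "u \<in> An" unfolding An_def by (rule anc_closed[OF En Xs])
    qed
    thus ?thesis using ins by simp
  qed
  have dc: "d_connected E a b (An - {a, b})" using m bA by simp
  have "p_adj E a b"
    using conn_closed[OF dc H]
  proof (elim disjE exE conjE)
    assume "(a, b) \<in> E" thus ?thesis using m unfolding p_adj_def by simp
  next
    assume "(b, a) \<in> E" thus ?thesis using m unfolding p_adj_def by simp
  next
    fix d assume d: "(a, d) \<in> E" "(b, d) \<in> E" "\<exists>z\<in>An - {a, b}. anc E d z"
    then obtain z where z: "z \<in> An" "anc E d z" by blast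
    then obtain x where x: "x \<in> {a, b}" "anc E z x" unfolding An_def by blast
    have "anc E d x" using z(2) x(2) unfolding anc_def by (meson rtrancl_trans)
    hence "anc E d a \<or> anc E d b" using \<open>x \<in> {a, b}\<close> by blast
    thus ?thesis using m d unfolding p_adj_def by blast
  qed
  thus "p \<in> PA n E" using ab m PA_mem by simp
qed



lemma CD_sub_E2:
  assumes s: "(P, \<pi>) \<in> POP n" and irr: "\<forall>x. (x, x) \<notin> E" and e1: "E1 n E (P, \<pi>) = PA n E"
  shows "CD n E \<subseteq> E2 n E (P, \<pi>)"
proof
  fix t assume t: "t \<in> CD n E"
  obtain a b c where abc: "t = (a, b, c)" by (cases t) auto
  have m: "a \<in> {1..n}" "b \<in> {1..n}" "c \<in> {1..n}" "a \<noteq> b" "b \<noteq> c" "a \<noteq> c"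
      "p_adj E a b" "p_adj E c b" "\<not> p_adj E a c" "anc E b a \<or> anc E b c"
    using t abc CD_mem by auto
  have i1: "(a, b) \<in> E1 n E (P, \<pi>)" "(c, b) \<in> E1 n E (P, \<pi>)" "(a, c) \<notin> E1 n E (P, \<pi>)"
    using m e1 PA_mem by auto
  have "\<exists>x\<in>{a, c}. (blk P b, blk P x) \<in> \<pi>"
  proof (rule ccontr)
    assume nb: "\<not> (\<exists>x\<in>{a, c}. (blk P b, blk P x) \<in> \<pi>)"
    have "b \<notin> below P \<pi> {a, c}" using below_iff[OF POP_D(1)[OF s] m(2)] nb by simp
    hence "d_connected E a c (below P \<pi> {a, c} - {a, c})"
      by (intro conductor_conn[OF irr m(7) m(8) m(10) m(6)]) auto
    hence "(a, c) \<in> E1 n E (P, \<pi>)" using m E1_mem by simp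
    thus False using i1 by simp
  qed
  thus "t \<in> E2 n E (P, \<pi>)" using abc m i1 E2_mem by simp
qed

lemma E2_s0_sub:
  assumes En: "E \<subseteq> {1..n} \<times> {1..n}" and e1: "E1 n E (scc_partition n E, scc_order n E) = PA n E"
  shows "E2 n E (scc_partition n E, scc_order n E) \<subseteq> CD n E"
proof
  fix t assume t: "t \<in> E2 n E (scc_partition n E, scc_order n E)"
  obtain a b c where abc: "t = (a, b, c)" by (cases t) auto
  have m: "a \<in> {1..n}" "b \<in> {1..n}" "c \<in> {1..n}" "a \<noteq> b" "b \<noteq> c" "a \<noteq> c"
     "(a, b) \<in> PA n E" "(c, b) \<in> PA n E" "(a, c) \<notin> PA n E"
     "\<exists>x\<in>{a, c}. (blk (scc_partition n E) b, blk (scc_partition n E) x) \<in> scc_order n E"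
    using t abc E2_mem[of a b c n E] e1 by auto
  obtain x where x: "x \<in> {a, c}" "(blk (scc_partition n E) b, blk (scc_partition n E) x) \<in> scc_order n E"
    using m(10) by blast
  have xn: "x \<in> {1..n}" using x m by auto
  have "anc E b x" using x(2) blk_scc[OF m(2)] blk_scc[OF xn] scc_order_iff[OF m(2) xn] by simp
  hence "anc E b a \<or> anc E b c" using x(1) by blast
  thus "t \<in> CD n E" using abc m PA_mem CD_mem by simp
qed

lemma PN_sub_E3:
  assumes s: "(P, \<pi>) \<in> POP n" and irr: "\<forall>x. (x, x) \<notin> E" and e1: "E1 n E (P, \<pi>) = PA n E"
  shows "perfect_nonconductors n E \<subseteq> E3 n E (P, \<pi>)"
proof
  fix t assume t: "t \<in> perfect_nonconductors n E"
  obtain a b c where abc: "t = (a, b, c)" by (cases t) auto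
  have m: "a \<in> {1..n}" "b \<in> {1..n}" "c \<in> {1..n}" "a \<noteq> c" "\<not> p_adj E a c" "p_adj E a b" "p_adj E c b"
    using t abc PN_mem by auto
  obtain d where d: "(a, d) \<in> E" "(c, d) \<in> E" "anc E d b" using t abc PN_mem by auto
  have ne: "a \<noteq> b" "b \<noteq> c" using m unfolding p_adj_def by auto
  have i1: "(a, b) \<in> E1 n E (P, \<pi>)" "(c, b) \<in> E1 n E (P, \<pi>)" "(a, c) \<notin> E1 n E (P, \<pi>)"
    using m e1 PA_mem by auto
  define Z where "Z = below P \<pi> {a, b, c} - {a, c}"
  have bZ: "b \<in> Z" unfolding Z_def using below_self[OF s, of "{a, b, c}"] m ne by auto
  have dad: "a \<noteq> d" "c \<noteq> d" using d irr by auto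
  have w: "dwalk E Z [a, d, c] [True, False]" unfolding dwalk_def is_collider_def
  proof (intro conjI allI impI)
    fix i assume "0 < i \<and> i < length [a, d, c] - 1"
    hence "i = 1" by auto
    thus "if [True, False] ! (i - 1) \<and> \<not> [True, False] ! i then \<exists>z\<in>Z. anc E ([a, d, c] ! i) z else [a, d, c] ! i \<notin> Z"
      using bZ d by auto
  next
    fix i assume "i < length [True, False]"
    hence "i = 0 \<or> i = 1" by auto
    thus "if [True, False] ! i then ([a, d, c] ! i, [a, d, c] ! Suc i) \<in> E else ([a, d, c] ! Suc i, [a, d, c] ! i) \<in> E"
      using d by auto
  qed auto
  have "d_connected E a c Z" unfolding d_connected_iff
    using w dad m(4) by (intro exI[of _ "[a, d, c]"] exI[of _ "[True, False]"]) auto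
  thus "t \<in> E3 n E (P, \<pi>)" using abc m ne i1 E3_mem Z_def by simp
qed

lemma E3_s0_sub:
  assumes En: "E \<subseteq> {1..n} \<times> {1..n}" and e1: "E1 n E (scc_partition n E, scc_order n E) = PA n E"
  shows "E3 n E (scc_partition n E, scc_order n E) \<subseteq> perfect_nonconductors n E"
proof
  fix t assume t: "t \<in> E3 n E (scc_partition n E, scc_order n E)"
  obtain a b c where abc: "t = (a, b, c)" by (cases t) auto
  have m: "a \<in> {1..n}" "b \<in> {1..n}" "c \<in> {1..n}" "a \<noteq> b" "b \<noteq> c" "a \<noteq> c"
     "(a, b) \<in> PA n E" "(c, b) \<in> PA n E" "(a, c) \<notin> PA n E"
     "d_connected E a c (below (scc_partition n E) (scc_order n E) {a, b, c} - {a, c})"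
    using t abc E3_mem[of a b c n E] e1 by auto
  have pa: "p_adj E a b" "p_adj E c b" "\<not> p_adj E a c" using m PA_mem by auto
  define An where "An = {v \<in> {1..n}. \<exists>x\<in>{a, b, c}. anc E v x}"
  have Xs: "{a, b, c} \<subseteq> {1..n}" using m by simp
  have bA: "below (scc_partition n E) (scc_order n E) {a, b, c} = An" unfolding An_def
    by (rule below0[OF En Xs])
  have aA: "a \<in> An" "c \<in> An" unfolding An_def anc_def using m by auto
  have ins: "insert a (insert c (An - {a, c})) = An" using aA by auto
  have H: "\<forall>u v. v \<in> insert a (insert c (An - {a, c})) \<longrightarrow> anc E u v \<longrightarrow> u \<in> insert a (insert c (An - {a, c}))"
  proof -
    have "\<forall>u v. v \<in> An \<longrightarrow> anc E u v \<longrightarrow> u \<in> An"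
    proof (intro allI impI)
      fix u v assume "v \<in> An" "anc E u v"
      thus "u \<in> An" unfolding An_def by (rule anc_closed[OF En Xs])
    qed
    thus ?thesis using ins by simp
  qed
  have dc: "d_connected E a c (An - {a, c})" using m bA by simp
  have padj_d: "p_adj E a c" if "(a, d) \<in> E" "(c, d) \<in> E" "anc E d a \<or> anc E d c" for d
    using that m unfolding p_adj_def by blast
  obtain d where d: "(a, d) \<in> E" "(c, d) \<in> E" "\<exists>z\<in>An - {a, c}. anc E d z"
    using conn_closed[OF dc H] pa(3) m(6) unfolding p_adj_def by blast
  then obtain z where z: "z \<in> An" "anc E d z" by blast
  then obtain x where x: "x \<in> {a, b, c}" "anc E z x" unfolding An_def by blast
  have dx: "anc E d x" using z(2) x(2) unfolding anc_def by (meson rtrancl_trans)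
  have ndac: "\<not> anc E d a" "\<not> anc E d c" using padj_d[OF d(1) d(2)] pa(3) by auto
  hence db: "anc E d b" using dx x(1) by auto
  have "\<not> anc E b a" "\<not> anc E b c" using db ndac unfolding anc_def by (meson rtrancl_trans)+
  thus "t \<in> perfect_nonconductors n E" using abc m pa d db PN_mem by auto
qed



theorem proposition3p10:
  fixes n :: nat and E :: "(nat \<times> nat) set"
  assumes "n \<ge> 1"
    and "E \<subseteq> {1..n} \<times> {1..n}"
    and "\<forall>x. (x, x) \<notin> E"
  shows "(scc_partition n E, scc_order n E) \<in> S3 n E
    \<and> (\<forall>s\<in>S3 n E. E3 n E s = perfect_nonconductors n E)"
proof -
  note En = assms(2) and irr = assms(3)
  define s0 where "s0 = (scc_partition n E, scc_order n E)"
  define S1 where "S1 = argmin_on (POP n) (E1 n E)"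
  define S2 where "S2 = argmin_on S1 (E2 n E)"
  have S3eq: "S3 n E = argmin_on S2 (E3 n E)" unfolding S3_def S2_def S1_def by simp
  have fin1: "finite (E1 n E s)" for s by (rule finite_subset[OF E1_fin]) auto
  have fin2: "finite (E2 n E s)" for s by (rule finite_subset[OF E2_fin]) auto
  have fin3: "finite (E3 n E s)" for s by (rule finite_subset[OF E3_fin]) auto
  have finPN: "finite (perfect_nonconductors n E)"
    by (rule finite_subset[of _ "{1..n} \<times> {1..n} \<times> {1..n}"]) (auto simp: perfect_nonconductors_def)
  have finCD: "finite (CD n E)"
    by (rule finite_subset[of _ "{1..n} \<times> {1..n} \<times> {1..n}"]) (auto simp: CD_def)
  have s0P: "s0 \<in> POP n" unfolding s0_def by (rule s0_POP)
  have PAsub: "PA n E \<subseteq> E1 n E s" if "s \<in> POP n" for s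
    using that PA_sub_E1[OF _ irr] by (cases s) auto
  have e1s0: "E1 n E s0 = PA n E" using E1_s0_sub[OF En] PAsub[OF s0P] unfolding s0_def by auto
  have s0S1: "s0 \<in> S1" unfolding S1_def argmin_on_def
  proof (intro CollectI conjI ballI)
    show "s0 \<in> POP n" by (rule s0P)
    fix t assume t: "t \<in> POP n"
    show "card (E1 n E s0) \<le> card (E1 n E t)" using card_mono[OF fin1 PAsub[OF t]] e1s0 by simp
  qed
  have S1P: "t \<in> POP n" if "t \<in> S1" for t using that unfolding S1_def argmin_on_def by auto
  have S1e1: "E1 n E t = PA n E" if t: "t \<in> S1" for t
  proof -
    have "card (E1 n E t) \<le> card (E1 n E s0)" using t s0P unfolding S1_def argmin_on_def by auto
    hence "card (E1 n E t) \<le> card (PA n E)" using e1s0 by simp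
    thus ?thesis using card_seteq[OF fin1 PAsub[OF S1P[OF t]]] by simp
  qed
  have CDsub: "CD n E \<subseteq> E2 n E t" if t: "t \<in> S1" for t
    using CD_sub_E2[OF _ irr] S1P[OF t] S1e1[OF t] by (cases t) auto
  have PNsub: "perfect_nonconductors n E \<subseteq> E3 n E t" if t: "t \<in> S1" for t
    using PN_sub_E3[OF _ irr] S1P[OF t] S1e1[OF t] by (cases t) auto
  have e2s0: "E2 n E s0 \<subseteq> CD n E" using E2_s0_sub[OF En] e1s0 unfolding s0_def by auto
  have e3s0: "E3 n E s0 \<subseteq> perfect_nonconductors n E" using E3_s0_sub[OF En] e1s0 unfolding s0_def by auto
  have s0S2: "s0 \<in> S2" unfolding S2_def argmin_on_def
  proof (intro CollectI conjI ballI)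
    show "s0 \<in> S1" by (rule s0S1)
    fix t assume t: "t \<in> S1"
    have "card (E2 n E s0) \<le> card (CD n E)" by (rule card_mono[OF finCD e2s0])
    also have "\<dots> \<le> card (E2 n E t)" by (rule card_mono[OF fin2 CDsub[OF t]])
    finally show "card (E2 n E s0) \<le> card (E2 n E t)" .
  qed
  have S2S1: "t \<in> S1" if "t \<in> S2" for t using that unfolding S2_def argmin_on_def by auto
  have s0S3: "s0 \<in> S3 n E" unfolding S3eq argmin_on_def
  proof (intro CollectI conjI ballI)
    show "s0 \<in> S2" by (rule s0S2)
    fix t assume t: "t \<in> S2"
    have "card (E3 n E s0) \<le> card (perfect_nonconductors n E)" by (rule card_mono[OF finPN e3s0])
    also have "\<dots> \<le> card (E3 n E t)" by (rule card_mono[OF fin3 PNsub[OF S2S1[OF t]]])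
    finally show "card (E3 n E s0) \<le> card (E3 n E t)" .
  qed
  have "E3 n E s = perfect_nonconductors n E" if s: "s \<in> S3 n E" for s
  proof -
    have sS2: "s \<in> S2" using s unfolding S3eq argmin_on_def by auto
    have "card (E3 n E s) \<le> card (E3 n E s0)" using s s0S2 unfolding S3eq argmin_on_def by auto
    also have "\<dots> \<le> card (perfect_nonconductors n E)" by (rule card_mono[OF finPN e3s0])
    finally have "card (E3 n E s) \<le> card (perfect_nonconductors n E)" .
    from card_seteq[OF fin3 PNsub[OF S2S1[OF sS2]] this] show ?thesis by simp
  qed
  thus ?thesis using s0S3 unfolding s0_def by blast
qed


end
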